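(* Let $f\in\mathbb{R}[x,y]$ be an irreducible polynomial and $X=V(f)=\{(x,y)\in\mathbb{R}^2: f(x,y)=0\}$. Then $X$ has a cell decomposition $\mathcal{A}$ with the finiteness property.
   Context: A cell decomposition of a set $X\subseteq\mathbb{R}^2$ is a partition of $X$ into (finitely or countably many) cells, each of which is a semi-algebraic set: 0-cells are points, 1-cells are subsets homeomorphic to an open interval, 2-cells are subsets homeomorphic to an open disk. A shortest-length curve in $X$ between two points $A,B\in X$ is a piecewise $C^2$ curve $\gamma$ from $A$ to $B$ lying entirely in $X$ whose length is minimal among all piecewise $C^2$ curves in $X$ from $A$ to $B$. A geodesic line segment (relative to the decomposition) is either a straight line segment or a connected arc contained (partially or entirely) in a 1-cell. A cell decomposition $\mathcal{A}$ of $X$ has the finiteness property if for every shortest-length curve $\gamma$ in $X$ between two points of $X$ and every cell $e\in\mathcal{A}$, the set $\gamma\cap e$ is either empty or has finitely many connected components, each of which is either a singleton or a geodesic line segment. *)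

theory Defs
  imports "HOL-Analysis.Analysis" "HOL-Computational_Algebra.Polynomial"
begin

text \<open>Bivariate real polynomials are represented as elements of (R[x])[y], i.e. the type
  real poly poly; this ring is canonically isomorphic to R[x,y]. Points of R^2 are pairs.\<close>

definition peval2 :: "real poly poly \<Rightarrow> real \<times> real \<Rightarrow> real" where
  "peval2 p z = poly (map_poly (\<lambda>c. poly c (fst z)) p) (snd z)"

definition zero_set :: "real poly poly \<Rightarrow> (real \<times> real) set" where
  "zero_set f = {z. peval2 f z = 0}"

inductive_set semialgebraic :: "(real \<times> real) set set" where
  sa_eq: "{z. peval2 p z = 0} \<in> semialgebraic"
| sa_pos: "{z. peval2 p z > 0} \<in> semialgebraic"
| sa_un: "S \<in> semialgebraic \<Longrightarrow> T \<in> semialgebraic \<Longrightarrow> S \<union> T \<in> semialgebraic"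
| sa_compl: "S \<in> semialgebraic \<Longrightarrow> - S \<in> semialgebraic"

definition cell0 :: "(real \<times> real) set \<Rightarrow> bool" where
  "cell0 e \<longleftrightarrow> (\<exists>a. e = {a})"

definition cell1 :: "(real \<times> real) set \<Rightarrow> bool" where
  "cell1 e \<longleftrightarrow> e homeomorphic {0<..<(1::real)}"

definition cell2 :: "(real \<times> real) set \<Rightarrow> bool" where
  "cell2 e \<longleftrightarrow> e homeomorphic ball (0::real \<times> real) 1"

definition is_cell :: "(real \<times> real) set \<Rightarrow> bool" where
  "is_cell e \<longleftrightarrow> e \<in> semialgebraic \<and> (cell0 e \<or> cell1 e \<or> cell2 e)"

definition cell_decomposition :: "(real \<times> real) set set \<Rightarrow> (real \<times> real) set \<Rightarrow> bool" where
  "cell_decomposition \<A> X \<longleftrightarrow>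
     countable \<A> \<and> (\<forall>e\<in>\<A>. is_cell e \<and> e \<noteq> {}) \<and>
     (\<forall>e\<in>\<A>. \<forall>e'\<in>\<A>. e \<noteq> e' \<longrightarrow> e \<inter> e' = {}) \<and> \<Union>\<A> = X"

definition C2_on_interval :: "(real \<Rightarrow> real \<times> real) \<Rightarrow> real \<Rightarrow> real \<Rightarrow> bool" where
  "C2_on_interval g a b \<longleftrightarrow>
     (\<exists>U h h' h''. open U \<and> {a..b} \<subseteq> U \<and> (\<forall>t\<in>{a..b}. h t = g t) \<and>
        (\<forall>t\<in>U. (h has_vector_derivative h' t) (at t) \<and> (h' has_vector_derivative h'' t) (at t)) \<and>
        continuous_on U h'')"

definition piecewise_C2_curve :: "(real \<Rightarrow> real \<times> real) \<Rightarrow> bool" where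
  "piecewise_C2_curve g \<longleftrightarrow> continuous_on {0..1} g \<and>
     (\<exists>K. finite K \<and> K \<subseteq> {0..1} \<and> 0 \<in> K \<and> 1 \<in> K \<and>
        (\<forall>a\<in>K. \<forall>b\<in>K. a < b \<and> {a<..<b} \<inter> K = {} \<longrightarrow> C2_on_interval g a b))"

definition curve_length :: "(real \<Rightarrow> real \<times> real) \<Rightarrow> real" where
  "curve_length g = integral {0..1} (\<lambda>t. norm (vector_derivative g (at t)))"

definition curve_in :: "(real \<Rightarrow> real \<times> real) \<Rightarrow> (real \<times> real) set \<Rightarrow> real \<times> real \<Rightarrow> real \<times> real \<Rightarrow> bool" where
  "curve_in g X A B \<longleftrightarrow> piecewise_C2_curve g \<and> g ` {0..1} \<subseteq> X \<and> g 0 = A \<and> g 1 = B"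

definition shortest_curve :: "(real \<Rightarrow> real \<times> real) \<Rightarrow> (real \<times> real) set \<Rightarrow> real \<times> real \<Rightarrow> real \<times> real \<Rightarrow> bool" where
  "shortest_curve g X A B \<longleftrightarrow> curve_in g X A B \<and>
     (\<forall>g'. curve_in g' X A B \<longrightarrow> curve_length g \<le> curve_length g')"

definition straight_segment :: "(real \<times> real) set \<Rightarrow> bool" where
  "straight_segment C \<longleftrightarrow> connected C \<and> (\<exists>a b. a \<noteq> b \<and> C \<subseteq> {a + t *\<^sub>R (b - a) | t. True})
      \<and> (\<exists>p q. p \<in> C \<and> q \<in> C \<and> p \<noteq> q)"

definition geodesic_segment :: "(real \<times> real) set set \<Rightarrow> (real \<times> real) set \<Rightarrow> bool" where
  "geodesic_segment \<A> C \<longleftrightarrow> straight_segment C \<or>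
     (connected C \<and> (\<exists>p q. p \<in> C \<and> q \<in> C \<and> p \<noteq> q) \<and> (\<exists>e\<in>\<A>. cell1 e \<and> C \<subseteq> e))"

definition finiteness_property :: "(real \<times> real) set set \<Rightarrow> (real \<times> real) set \<Rightarrow> bool" where
  "finiteness_property \<A> X \<longleftrightarrow>
     (\<forall>A\<in>X. \<forall>B\<in>X. \<forall>g. shortest_curve g X A B \<longrightarrow>
        (\<forall>e\<in>\<A>. let S = g ` {0..1} \<inter> e in
           S = {} \<or> (finite (components S) \<and>
             (\<forall>C\<in>components S. (\<exists>p. C = {p}) \<or> geodesic_segment \<A> C))))"

end

theory Submission
  imports Defs "HOL-Computational_Algebra.Polynomial_Factorial"
    "HOL-Computational_Algebra.Euclidean_Algorithm" "HOL-Computational_Algebra.Field_as_Ring"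
begin


lemma peval2_alt: "peval2 p (x, y) = poly (poly p [:y:]) x"
  unfolding peval2_def
  by (induction p) (auto simp: map_poly_pCons)

lemma peval2_alt': "peval2 p z = poly (poly p [:snd z:]) (fst z)"
  using peval2_alt[of p "fst z" "snd z"] by simp

lemma peval2_mult [simp]: "peval2 (p * q) z = peval2 p z * peval2 q z"
  by (simp add: peval2_alt')
lemma peval2_add [simp]: "peval2 (p + q) z = peval2 p z + peval2 q z"
  by (simp add: peval2_alt')
lemma peval2_uminus [simp]: "peval2 (- p) z = - peval2 p z"
  by (simp add: peval2_alt')
lemma peval2_const [simp]: "peval2 [:c:] z = poly c (fst z)"
  by (simp add: peval2_alt')
lemma peval2_lin: "peval2 [:[:a:], [:b:]:] z = a + b * snd z"
  by (simp add: peval2_alt')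

lemma peval2_sum: "peval2 p z = (\<Sum>i\<le>degree p. poly (coeff p i) (fst z) * snd z ^ i)"
  unfolding peval2_alt' poly_altdef[of p "[:snd z:]"]
  by (simp add: poly_sum poly_power)

lemma continuous_peval2: "continuous_on S (peval2 p)"
  unfolding peval2_sum[abs_def]
  by (intro continuous_intros continuous_on_poly)

lemma closed_zero_set: "closed {z. peval2 p z = 0}"
  using continuous_closed_preimage_constant[OF continuous_peval2[of UNIV p]] closed_UNIV by simp

lemma map_poly_pderiv2:
  "map_poly (\<lambda>c. poly c x) (pderiv p) = pderiv (map_poly (\<lambda>c. poly c x) p)"
  by (rule poly_eqI) (simp add: coeff_map_poly coeff_pderiv)

lemma peval2_deriv:
  "((\<lambda>y. peval2 p (x, y)) has_real_derivative peval2 (pderiv p) (x, y)) (at y within S)"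
  unfolding peval2_def fst_conv snd_conv map_poly_pderiv2
  by (rule DERIV_subset[OF poly_DERIV]) simp


lemma irred_content:
  fixes f :: "real poly poly"
  assumes "irreducible f" "degree f \<noteq> 0"
  shows "content f = 1"
  using nonconst_poly_irreducible_iff[OF assms(2)] assms(1) by blast

lemma slice_nonzero:
  fixes f :: "real poly poly"
  assumes "irreducible f" "degree f \<noteq> 0"
  shows "map_poly (\<lambda>c. poly c x0) f \<noteq> 0"
proof
  assume H: "map_poly (\<lambda>c. poly c x0) f = 0"
  have "\<forall>n. [:-x0,1:] dvd coeff f n"
  proof
    fix n
    have "coeff (map_poly (\<lambda>c. poly c x0) f) n = 0" using H by simp
    then have "poly (coeff f n) x0 = 0" by (simp add: coeff_map_poly)
    then show "[:-x0,1:] dvd coeff f n" by (simp add: poly_eq_0_iff_dvd)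
  qed
  then have "[:[:-x0,1:]:] dvd f" by (simp add: const_poly_dvd_iff)
  then have "[:-x0,1:] dvd content f" by (simp add: const_poly_dvd_iff_dvd_content)
  then have "is_unit [:-x0,1::real:]" using irred_content[OF assms] by simp
  then show False by (simp add: is_unit_poly_iff)
qed

lemma slice_finite:
  fixes f :: "real poly poly"
  assumes "irreducible f" "degree f \<noteq> 0"
  shows "finite {y. peval2 f (x0, y) = 0}"
  using poly_roots_finite[OF slice_nonzero[OF assms, of x0]] by (simp add: peval2_def)

lemma lincomb_aux:
  fixes p h u v u' v' q F G :: "'a::comm_ring_1"
  assumes "p = u * F + v * G" "h = u' * F + v' * G"
  shows "p - q * h = (u - q * u') * F + (v - q * v') * G"
  using assms by (simp add: algebra_simps)

lemma smult_comb_aux: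
  fixes u v F G :: "'a::field poly"
  assumes "[:c:] = u * F + v * G" "c \<noteq> 0"
  shows "smult (inverse c) u * F + smult (inverse c) v * G = 1"
proof -
  have "smult (inverse c) u * F + smult (inverse c) v * G = smult (inverse c) (u * F + v * G)"
    by (simp add: smult_add_right)
  also have "\<dots> = smult (inverse c) [:c:]" using assms(1) by simp
  also have "\<dots> = 1" using assms(2) by (simp add: one_pCons)
  finally show ?thesis .
qed

lemma smult_comb_aux2:
  fixes u v F G :: "'a::comm_ring_1 poly"
  shows "smult (a * b) (u * F + v * G) = smult b (smult a u) * F + smult a (smult b v) * G"
  by (simp add: smult_add_right algebra_simps)

lemma bezout_fract:
  fixes f :: "real poly poly"
  assumes "irreducible f" "degree f \<noteq> 0"
  shows "\<exists>u v. u * fract_poly f + v * fract_poly (pderiv f) = 1"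
proof -
  let ?F = "fract_poly f" and ?G = "fract_poly (pderiv f)"
  define I where "I = {h. \<exists>u v. h = u * ?F + v * ?G}"
  have irr: "irreducible ?F" using nonconst_poly_irreducible_iff[OF assms(2)] assms(1) by blast
  have G0: "?G \<noteq> 0" using assms(2) by (simp add: pderiv_eq_0_iff)
  have dF: "degree ?F = degree f" by (rule degree_map_poly) simp
  have dG: "degree ?G = degree (pderiv f)" by (rule degree_map_poly) simp
  have degG: "degree ?G < degree ?F"
    unfolding dF dG degree_pderiv using assms(2) by linarith
  have "?G = 0 * ?F + 1 * ?G" by simp
  then have GI: "?G \<in> I" unfolding I_def by blast
  have "?F = 1 * ?F + 0 * ?G" by simp
  then have FI: "?F \<in> I" unfolding I_def by blast
  define P where "P = (\<lambda>n. \<exists>h\<in>I. h \<noteq> 0 \<and> degree h = n)"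
  have "P (degree ?G)" unfolding P_def using GI G0 by blast
  then have "P (LEAST n. P n)" by (rule LeastI)
  then obtain h where h: "h \<in> I" "h \<noteq> 0" "degree h = (LEAST n. P n)" unfolding P_def by blast
  have hmin: "degree h \<le> degree h'" if "h' \<in> I" "h' \<noteq> 0" for h'
    unfolding h(3) by (rule Least_le) (use that in \<open>auto simp: P_def\<close>)
  have Imod: "p mod h \<in> I" if pI: "p \<in> I" for p
  proof -
    obtain u v where e1: "p = u * ?F + v * ?G" using pI unfolding I_def by blast
    obtain u' v' where e2: "h = u' * ?F + v' * ?G" using h(1) unfolding I_def by blast
    have "p mod h = p - (p div h) * h" by (rule minus_div_mult_eq_mod[symmetric])
    also have "\<dots> = (u - (p div h) * u') * ?F + (v - (p div h) * v') * ?G"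
      by (rule lincomb_aux[OF e1 e2])
    finally have "p mod h = (u - (p div h) * u') * ?F + (v - (p div h) * v') * ?G" .
    then show ?thesis unfolding I_def by blast
  qed
  have dvdI: "h dvd p" if "p \<in> I" for p
  proof (rule ccontr)
    assume "\<not> h dvd p"
    then have "p mod h \<noteq> 0" by (simp add: mod_eq_0_iff_dvd)
    then have "degree (p mod h) < degree h" using degree_mod_less[OF h(2)] by blast
    with hmin[OF Imod[OF that] \<open>p mod h \<noteq> 0\<close>] show False by simp
  qed
  have "degree h = 0"
  proof (rule ccontr)
    assume dh: "degree h \<noteq> 0"
    have "h dvd ?F" using dvdI[OF FI] .
    then have "?F dvd h \<or> is_unit h" using irr by (meson irreducible_altdef)
    moreover have "\<not> is_unit h" using dh by (auto simp: is_unit_poly_iff)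
    ultimately have "?F dvd ?G" using dvdI[OF GI] dvd_trans by blast
    then have "degree ?F \<le> degree ?G" using G0 by (rule dvd_imp_degree_le)
    then show False using degG by simp
  qed
  then obtain c where c: "h = [:c:]" by (metis degree_eq_zeroE)
  with h(2) have c0: "c \<noteq> 0" by simp
  obtain u v where heq: "h = u * ?F + v * ?G" using h(1) unfolding I_def by blast
  have "[:c:] = u * ?F + v * ?G" using heq unfolding c .
  then have "smult (inverse c) u * ?F + smult (inverse c) v * ?G = 1"
    by (rule smult_comb_aux[OF _ c0])
  then show ?thesis by blast
qed

lemma fract_clear:
  fixes u :: "real poly fract poly"
  obtains n d u' where "d \<noteq> 0" "smult (to_fract d) u = smult (to_fract n) (fract_poly u')"
proof -
  obtain c u' where cu: "u = smult c (fract_poly u')"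
    using content_decompose_fract[of u] by metis
  define n d where "n = fst (quot_of_fract c)" and "d = snd (quot_of_fract c)"
  have d0: "d \<noteq> 0" by (simp add: d_def snd_quot_of_fract_nonzero)
  have c: "c = to_fract n / to_fract d"
    unfolding n_def d_def Fract_conv_to_fract[symmetric] by simp
  have "smult (to_fract d) u = smult (to_fract n) (fract_poly u')"
    using d0 by (simp add: cu c)
  then show ?thesis using that d0 by blast
qed

lemma bezout_poly:
  fixes f :: "real poly poly"
  assumes "irreducible f" "degree f \<noteq> 0"
  shows "\<exists>U V r. r \<noteq> 0 \<and> U * f + V * pderiv f = [:r:]"
proof -
  obtain u v where uv: "u * fract_poly f + v * fract_poly (pderiv f) = 1"
    using bezout_fract[OF assms] by blast
  obtain n1 d1 u' where 1: "d1 \<noteq> 0" "smult (to_fract d1) u = smult (to_fract n1) (fract_poly u')"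
    by (rule fract_clear)
  obtain n2 d2 v' where 2: "d2 \<noteq> 0" "smult (to_fract d2) v = smult (to_fract n2) (fract_poly v')"
    by (rule fract_clear)
  have c1: "smult (to_fract d1 * to_fract d2) (u * fract_poly f + v * fract_poly (pderiv f)) =
        smult (to_fract d2) (smult (to_fract d1) u) * fract_poly f +
        smult (to_fract d1) (smult (to_fract d2) v) * fract_poly (pderiv f)"
    by (rule smult_comb_aux2)
  have c2: "smult (to_fract d2) (smult (to_fract d1) u) * fract_poly f +
        smult (to_fract d1) (smult (to_fract d2) v) * fract_poly (pderiv f) = 
        smult (to_fract n1 * to_fract d2) (fract_poly u') * fract_poly f +
        smult (to_fract n2 * to_fract d1) (fract_poly v') * fract_poly (pderiv f)"
    unfolding 1(2) 2(2) by (simp only: smult_smult mult.commute)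
  have c3: "smult (to_fract n1 * to_fract d2) (fract_poly u') * fract_poly f +
        smult (to_fract n2 * to_fract d1) (fract_poly v') * fract_poly (pderiv f) =
        fract_poly (smult (n1 * d2) u' * f + smult (n2 * d1) v' * pderiv f)"
    by (simp only: fract_poly_add fract_poly_mult fract_poly_smult to_fract_mult)
  have c4: "smult (to_fract d1 * to_fract d2) (u * fract_poly f + v * fract_poly (pderiv f)) =
     fract_poly [:d1 * d2:]"
    unfolding uv by (simp add: one_pCons map_poly_pCons)
  have "fract_poly (smult (n1 * d2) u' * f + smult (n2 * d1) v' * pderiv f) = fract_poly [:d1 * d2:]"
    using c4 unfolding c1 c2 c3 .
  then have "smult (n1 * d2) u' * f + smult (n2 * d1) v' * pderiv f = [:d1 * d2:]"
    by (simp only: fract_poly_eq_iff)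
  moreover have "d1 * d2 \<noteq> 0" using 1(1) 2(1) by simp
  ultimately show ?thesis by blast
qed

lemma crit_finite:
  fixes f :: "real poly poly"
  assumes "irreducible f" "degree f \<noteq> 0"
  shows "finite {z. peval2 f z = 0 \<and> peval2 (pderiv f) z = 0}"
proof -
  obtain U V r where r: "r \<noteq> 0" "U * f + V * pderiv f = [:r:]"
    using bezout_poly[OF assms] by blast
  have "{z. peval2 f z = 0 \<and> peval2 (pderiv f) z = 0} \<subseteq>
        (\<Union>x\<in>{x. poly r x = 0}. (\<lambda>y. (x, y)) ` {y. peval2 f (x, y) = 0})"
  proof clarify
    fix a b assume "peval2 f (a, b) = 0" "peval2 (pderiv f) (a, b) = 0"
    moreover have "peval2 (U * f + V * pderiv f) (a, b) = poly r a" using r(2) by simp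
    ultimately have "poly r a = 0" by simp
    then show "(a, b) \<in> (\<Union>x\<in>{x. poly r x = 0}. (\<lambda>y. (x, y)) ` {y. peval2 f (x, y) = 0})"
      using \<open>peval2 f (a, b) = 0\<close> by blast
  qed
  moreover have "finite (\<Union>x\<in>{x. poly r x = 0}. (\<lambda>y. (x, y)) ` {y. peval2 f (x, y) = 0})"
    using poly_roots_finite[OF r(1)] slice_finite[OF assms] by blast
  ultimately show ?thesis by (rule finite_subset)
qed


definition good :: "real poly poly \<Rightarrow> real \<Rightarrow> real \<Rightarrow> real \<Rightarrow> real \<Rightarrow> bool" where
  "good f a b c d \<longleftrightarrow> a < b \<and> c < d \<and>
     (\<forall>x\<in>{a..b}. \<exists>!y. y \<in> {c..d} \<and> peval2 f (x, y) = 0) \<and>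
     (\<forall>x\<in>{a..b}. peval2 f (x, c) \<noteq> 0 \<and> peval2 f (x, d) \<noteq> 0)"

definition phi :: "real poly poly \<Rightarrow> real \<Rightarrow> real \<Rightarrow> real \<Rightarrow> real" where
  "phi f c d x = (THE y. y \<in> {c..d} \<and> peval2 f (x, y) = 0)"

lemma good_phi:
  assumes "good f a b c d" "x \<in> {a..b}"
  shows "phi f c d x \<in> {c<..<d}" "peval2 f (x, phi f c d x) = 0"
proof -
  have ex: "\<exists>!y. y \<in> {c..d} \<and> peval2 f (x, y) = 0" using assms unfolding good_def by blast
  have "phi f c d x \<in> {c..d} \<and> peval2 f (x, phi f c d x) = 0"
    unfolding phi_def by (rule theI'[OF ex])
  moreover have "peval2 f (x, c) \<noteq> 0" "peval2 f (x, d) \<noteq> 0" using assms unfolding good_def by auto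
  ultimately show "phi f c d x \<in> {c<..<d}" "peval2 f (x, phi f c d x) = 0"
    by (metis atLeastAtMost_iff greaterThanLessThan_iff order_less_le)+
qed

lemma good_phi_unique:
  assumes "good f a b c d" "x \<in> {a..b}" "y \<in> {c..d}" "peval2 f (x, y) = 0"
  shows "y = phi f c d x"
proof -
  have ex: "\<exists>!y. y \<in> {c..d} \<and> peval2 f (x, y) = 0" using assms unfolding good_def by blast
  have "(THE y. y \<in> {c..d} \<and> peval2 f (x, y) = 0) = y"
    by (rule the1_equality[OF ex]) (use assms(3,4) in simp)
  then show ?thesis unfolding phi_def by simp
qed

lemma good_graph:
  assumes "good f a b c d" "S \<subseteq> {a..b}" "T \<subseteq> {c..d}" "{c<..<d} \<subseteq> T"
  shows "{z. peval2 f z = 0} \<inter> (S \<times> T) = (\<lambda>x. (x, phi f c d x)) ` S"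
proof safe
  fix x y assume "peval2 f (x, y) = 0" "x \<in> S" "y \<in> T"
  then have "y = phi f c d x" using good_phi_unique[OF assms(1)] assms(2,3) by blast
  then show "(x, y) \<in> (\<lambda>x. (x, phi f c d x)) ` S" using \<open>x \<in> S\<close> by blast
next
  fix x assume "x \<in> S"
  then show "peval2 f (x, phi f c d x) = 0" "phi f c d x \<in> T"
    using good_phi[OF assms(1)] assms(2,4) by blast+
qed

lemma good_cont:
  assumes "good f a b c d"
  shows "continuous_on {a..b} (phi f c d)"
proof (rule continuous_from_closed_graph[of "{c..d}"])
  show "compact {c..d::real}" by simp
  show "phi f c d \<in> {a..b} \<rightarrow> {c..d}" using good_phi[OF assms] by fastforce
  have "(\<lambda>x. (x, phi f c d x)) ` {a..b} = {z. peval2 f z = 0} \<inter> ({a..b} \<times> {c..d})"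
    using good_graph[OF assms, of "{a..b}" "{c..d}"] by (simp add: greaterThanLessThan_subseteq_atLeastAtMost_iff)
  then show "closed ((\<lambda>x. (x, phi f c d x)) ` {a..b})"
    using closed_zero_set[of f] by (simp add: closed_Int closed_Times)
qed

lemma good_sub:
  assumes "good f a b c d" "a \<le> a'" "a' < b'" "b' \<le> b"
  shows "good f a' b' c d"
  using assms unfolding good_def by auto

lemma good_agree:
  assumes g1: "good f a1 b1 c1 d1" and g2: "good f a2 b2 c2 d2"
    and x0: "x0 \<in> {a1..b1}" "x0 \<in> {a2..b2}" and eq: "phi f c1 d1 x0 = phi f c2 d2 x0"
    and x: "x \<in> {a1..b1}" "x \<in> {a2..b2}"
  shows "phi f c1 d1 x = phi f c2 d2 x"
proof -
  define I where "I = {a1..b1} \<inter> {a2..b2}"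
  define E where "E = {x\<in>I. phi f c1 d1 x - phi f c2 d2 x = 0}"
  have conI: "connected I" unfolding I_def by (simp add: is_interval_connected is_interval_Int)
  have c1: "continuous_on I (phi f c1 d1)"
    using good_cont[OF g1] by (rule continuous_on_subset) (auto simp: I_def)
  have c2: "continuous_on I (phi f c2 d2)"
    using good_cont[OF g2] by (rule continuous_on_subset) (auto simp: I_def)
  have cl: "closedin (top_of_set I) E"
    unfolding E_def by (rule continuous_closedin_preimage_constant) (intro continuous_intros c1 c2)
  have op: "openin (top_of_set I) E"
    unfolding openin_euclidean_subtopology_iff
  proof (intro conjI ballI)
    show "E \<subseteq> I" unfolding E_def by blast
    fix x assume xE: "x \<in> E"
    then have xI: "x \<in> I" and ex: "phi f c1 d1 x = phi f c2 d2 x" unfolding E_def by auto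
    define y where "y = phi f c1 d1 x"
    have y: "y \<in> {c1<..<d1}" unfolding y_def using good_phi(1)[OF g1] xI I_def by blast
    define e where "e = min (y - c1) (d1 - y)"
    have e: "e > 0" using y unfolding e_def by auto
    obtain r where r: "r > 0" "\<forall>x'\<in>I. dist x' x < r \<longrightarrow> dist (phi f c2 d2 x') (phi f c2 d2 x) < e"
      using c2 xI e unfolding continuous_on_iff by blast
    show "\<exists>r>0. \<forall>x'\<in>I. dist x' x < r \<longrightarrow> x' \<in> E"
    proof (intro exI[of _ r] conjI ballI impI)
      fix x' assume x'I: "x' \<in> I" and "dist x' x < r"
      then have "dist (phi f c2 d2 x') y < e" using r ex y_def by auto
      then have "phi f c2 d2 x' \<in> {c1..d1}" unfolding e_def dist_real_def by auto
      moreover have "peval2 f (x', phi f c2 d2 x') = 0" using good_phi(2)[OF g2] x'I I_def by blast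
      ultimately have "phi f c2 d2 x' = phi f c1 d1 x'"
        using good_phi_unique[OF g1] x'I I_def by blast
      then show "x' \<in> E" using x'I unfolding E_def by simp
    qed (use r in auto)
  qed
  have "x0 \<in> E" using x0 eq unfolding E_def I_def by simp
  then have "E = I" using conI cl op unfolding connected_clopen by blast
  moreover have "x \<in> I" using x unfolding I_def by simp
  ultimately have "x \<in> E" by simp
  then show ?thesis unfolding E_def by simp
qed


lemma open_sign_nbhd:
  fixes g :: "'a::metric_space \<Rightarrow> real"
  assumes "continuous_on UNIV g" "0 < g x0"
  shows "\<exists>r>0. \<forall>x. dist x x0 < r \<longrightarrow> 0 < g x"
proof -
  have "open {x. 0 < g x}" by (rule open_Collect_less) (use assms in \<open>auto intro: continuous_intros\<close>)
  then show ?thesis using assms(2) unfolding open_dist by auto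
qed

lemma cont_slice: "continuous_on UNIV (\<lambda>x. peval2 f (x, c))"
  by (rule continuous_on_compose2[OF continuous_peval2[of UNIV f]]) (auto intro: continuous_intros)

lemma cont_slice_y: "continuous_on S (\<lambda>y. peval2 f (x, y))"
  by (rule continuous_on_compose2[OF continuous_peval2[of UNIV f]]) (auto intro: continuous_intros)

lemma dist_pair_le: "dist (a::real, b::real) (c, d) \<le> dist a c + dist b d"
proof -
  have "dist (a, b) (c, d) = norm (a - c, b - d)" by (simp add: dist_norm)
  also have "\<dots> \<le> norm (a - c) + norm (b - d)" by (rule norm_Pair_le)
  finally show ?thesis by (simp add: dist_norm)
qed

lemma ift_pos:
  assumes z: "peval2 f (x0, y0) = 0" and pos: "peval2 (pderiv f) (x0, y0) > 0"
  shows "\<exists>\<delta>>0. \<exists>c d. c < y0 \<and> y0 < d \<and>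
           (\<forall>a b. x0 - \<delta> \<le> a \<longrightarrow> a < b \<longrightarrow> b \<le> x0 + \<delta> \<longrightarrow> good f a b c d)"
proof -
  obtain r where r: "r > 0" "\<forall>z. dist z (x0, y0) < r \<longrightarrow> 0 < peval2 (pderiv f) z"
    using open_sign_nbhd[OF continuous_peval2 pos] by blast
  define \<eta> where "\<eta> = r / 3"
  have eta: "\<eta> > 0" using r unfolding \<eta>_def by simp
  have Dpos: "0 < peval2 (pderiv f) (x, y)" if "\<bar>x - x0\<bar> \<le> \<eta>" "\<bar>y - y0\<bar> \<le> \<eta>" for x y
  proof -
    have "dist (x, y) (x0, y0) \<le> dist x x0 + dist y y0" by (rule dist_pair_le)
    also have "\<dots> < r" using that r(1) unfolding \<eta>_def dist_real_def by linarith
    finally show ?thesis using r(2) by blast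
  qed
  have mono: "peval2 f (x, y1) < peval2 f (x, y2)"
    if "\<bar>x - x0\<bar> \<le> \<eta>" "y0 - \<eta> \<le> y1" "y1 < y2" "y2 \<le> y0 + \<eta>" for x y1 y2
  proof (rule DERIV_pos_imp_increasing[OF that(3)])
    fix y assume "y1 \<le> y" "y \<le> y2"
    then have "0 < peval2 (pderiv f) (x, y)" using Dpos that by auto
    then show "\<exists>D. ((\<lambda>y. peval2 f (x, y)) has_real_derivative D) (at y) \<and> 0 < D"
      using peval2_deriv[of f x y UNIV] by blast
  qed
  define c where "c = y0 - \<eta>"
  define d where "d = y0 + \<eta>"
  have "peval2 f (x0, c) < 0" using mono[of x0 c y0] z eta unfolding c_def by simp
  then obtain r1 where r1: "r1 > 0" "\<forall>x. dist x x0 < r1 \<longrightarrow> 0 < - peval2 f (x, c)"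
    using open_sign_nbhd[of "\<lambda>x. - peval2 f (x, c)" x0] continuous_on_minus[OF cont_slice[of f c]]
    by auto
  have "0 < peval2 f (x0, d)" using mono[of x0 y0 d] z eta unfolding d_def by simp
  then obtain r2 where r2: "r2 > 0" "\<forall>x. dist x x0 < r2 \<longrightarrow> 0 < peval2 f (x, d)"
    using open_sign_nbhd[of "\<lambda>x. peval2 f (x, d)" x0] cont_slice[of f d] by blast
  define \<delta> where "\<delta> = min \<eta> (min r1 r2 / 2)"
  have delta: "\<delta> > 0" using eta r1 r2 unfolding \<delta>_def by simp
  show ?thesis
  proof (rule exI[of _ \<delta>], intro conjI delta, rule exI[of _ c], rule exI[of _ d], intro conjI allI impI)
    show "c < y0" "y0 < d" using eta unfolding c_def d_def by auto
    fix a b assume ab: "x0 - \<delta> \<le> a" "a < b" "b \<le> x0 + \<delta>"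
    have xs: "\<bar>x - x0\<bar> \<le> \<eta>" "peval2 f (x, c) < 0" "0 < peval2 f (x, d)" if "x \<in> {a..b}" for x
    proof -
      have "\<bar>x - x0\<bar> \<le> \<delta>" using that ab by auto
      then have "\<bar>x - x0\<bar> \<le> \<eta>" "dist x x0 < r1" "dist x x0 < r2"
        unfolding \<delta>_def dist_real_def using r1(1) r2(1) by auto
      then show "\<bar>x - x0\<bar> \<le> \<eta>" "peval2 f (x, c) < 0" "0 < peval2 f (x, d)"
        using r1(2) r2(2) by auto
    qed
    show "good f a b c d"
      unfolding good_def
    proof (intro conjI ballI)
      show "a < b" by fact
      show "c < d" using eta unfolding c_def d_def by simp
      fix x assume x: "x \<in> {a..b}"
      show "peval2 f (x, c) \<noteq> 0" "peval2 f (x, d) \<noteq> 0" using xs[OF x] by auto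
      have "\<exists>y\<ge>c. y \<le> d \<and> peval2 f (x, y) = 0"
        by (rule IVT') (use xs[OF x] eta c_def d_def cont_slice_y in auto)
      then obtain y where y: "y \<in> {c..d}" "peval2 f (x, y) = 0" by auto
      show "\<exists>!y. y \<in> {c..d} \<and> peval2 f (x, y) = 0"
      proof (rule ex1I[of _ y])
        show "y \<in> {c..d} \<and> peval2 f (x, y) = 0" using y by simp
        fix y' assume y': "y' \<in> {c..d} \<and> peval2 f (x, y') = 0"
        show "y' = y"
        proof (rule ccontr)
          assume "y' \<noteq> y"
          then consider "y' < y" | "y < y'" by linarith
          then show False
          proof cases
            case 1 then show False using mono[OF xs(1)[OF x], of y' y] y y' unfolding c_def d_def by auto
          next
            case 2 then show False using mono[OF xs(1)[OF x], of y y'] y y' unfolding c_def d_def by auto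
          qed
        qed
      qed
    qed
  qed
qed

lemma good_uminus: "good (- f) a b c d = good f a b c d"
  unfolding good_def by simp

lemma ift:
  assumes z: "peval2 f (x0, y0) = 0" and nz: "peval2 (pderiv f) (x0, y0) \<noteq> 0"
  shows "\<exists>\<delta>>0. \<exists>c d. c < y0 \<and> y0 < d \<and>
           (\<forall>a b. x0 - \<delta> \<le> a \<longrightarrow> a < b \<longrightarrow> b \<le> x0 + \<delta> \<longrightarrow> good f a b c d)"
proof (cases "peval2 (pderiv f) (x0, y0) > 0")
  case True
  then show ?thesis using ift_pos[OF z] by blast
next
  case False
  then have "peval2 (pderiv (- f)) (x0, y0) > 0" using nz by (simp add: pderiv_minus)
  moreover have "peval2 (- f) (x0, y0) = 0" using z by simp
  ultimately show ?thesis using ift_pos[of "- f" x0 y0] unfolding good_uminus by blast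
qed


lemma finite_components_union2:
  assumes "connected A" "connected B"
  shows "finite (components (A \<union> B))"
proof -
  let ?S = "A \<union> B"
  have key: "connected_component_set ?S x = connected_component_set ?S y"
    if "x \<in> C" "y \<in> C" "connected C" "C \<subseteq> ?S" for x y C
  proof -
    have "C \<subseteq> connected_component_set ?S x"
      by (rule connected_component_maximal) (use that in auto)
    then have "y \<in> connected_component_set ?S x" using that by blast
    then show ?thesis by (rule connected_component_eq[symmetric])
  qed
  have "components ?S \<subseteq> connected_component_set ?S ` ({SOME a. a \<in> A} \<union> {SOME b. b \<in> B})"
  proof
    fix C assume "C \<in> components ?S"
    then obtain x where x: "x \<in> ?S" "C = connected_component_set ?S x"
      unfolding components_def by blast
    show "C \<in> connected_component_set ?S ` ({SOME a. a \<in> A} \<union> {SOME b. b \<in> B})"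
    proof (cases "x \<in> A")
      case True
      then have "(SOME a. a \<in> A) \<in> A" by (rule someI)
      then have "C = connected_component_set ?S (SOME a. a \<in> A)"
        using key[of x A "SOME a. a \<in> A"] True assms x by auto
      then show ?thesis by blast
    next
      case False
      then have xB: "x \<in> B" using x by blast
      then have "(SOME a. a \<in> B) \<in> B" by (rule someI)
      then have "C = connected_component_set ?S (SOME a. a \<in> B)"
        using key[of x B "SOME a. a \<in> B"] xB assms x by auto
      then show ?thesis by blast
    qed
  qed
  then show ?thesis by (rule finite_subset) simp
qed

lemma good_finite_components:
  assumes g: "good f a b c d" and K: "connected K" "K \<subseteq> {z. peval2 f z = 0}"
  shows "finite (components (K \<inter> (\<lambda>x. (x, phi f c d x)) ` {a<..<b}))"
proof -
  define G where "G = (\<lambda>x. (x, phi f c d x))"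
  define X where "X = {z. peval2 f z = 0}"
  define e where "e = G ` {a<..<b}"
  define T where "T = {x \<in> {a<..<b}. G x \<in> K}"
  have contG: "continuous_on S G" if "S \<subseteq> {a..b}" for S
    unfolding G_def by (intro continuous_intros continuous_on_subset[OF good_cont[OF g]] that)
  have KeT: "K \<inter> e = G ` T" unfolding e_def T_def by auto
  show ?thesis
  proof (cases "K \<subseteq> e")
    case True
    then have "K \<inter> e = K" by blast
    then show ?thesis using K(1) components_eq_sing_iff[of K] unfolding G_def e_def
      by (metis components_empty finite.emptyI finite_insert)
  next
    case notsub: False
    have claim: "u \<notin> T" if vw: "a < v" "v < u" "u < w" "w < b" "v \<notin> T" "w \<notin> T" for u v w
    proof
      assume uT: "u \<in> T"
      define U1 where "U1 = {v<..<w} \<times> {c<..<d}"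
      define U2 where "U2 = - (G ` {v..w})"
      have o1: "open U1" unfolding U1_def by (simp add: open_Times)
      have "compact (G ` {v..w})" by (rule compact_continuous_image) (use contG vw in auto)
      then have o2: "open U2" unfolding U2_def by (simp add: compact_imp_closed open_Compl)
      have gr: "X \<inter> U1 = G ` {v<..<w}" unfolding X_def U1_def G_def
        by (rule good_graph[OF g]) (use vw in auto)
      have cover: "K \<subseteq> U1 \<union> U2"
      proof
        fix z assume zK: "z \<in> K"
        show "z \<in> U1 \<union> U2"
        proof (cases "z \<in> G ` {v..w}")
          case True
          then obtain x where x: "x \<in> {v..w}" "z = G x" by blast
          have "x \<noteq> v" using vw zK x unfolding T_def by auto
          moreover have "x \<noteq> w" using vw zK x unfolding T_def by auto
          ultimately have "x \<in> {v<..<w}" using x by auto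
          moreover have "phi f c d x \<in> {c<..<d}" using good_phi(1)[OF g] vw \<open>x \<in> {v<..<w}\<close> by auto
          ultimately show ?thesis unfolding U1_def x(2) G_def by auto
        next
          case False then show ?thesis unfolding U2_def by blast
        qed
      qed
      have disj: "U1 \<inter> U2 \<inter> K = {}"
      proof -
        have "U1 \<inter> K \<subseteq> X \<inter> U1" using K(2) unfolding X_def by blast
        also have "\<dots> \<subseteq> G ` {v..w}" unfolding gr by auto
        finally have "U1 \<inter> K \<subseteq> G ` {v..w}" .
        then show ?thesis unfolding U2_def by blast
      qed
      have ne1: "U1 \<inter> K \<noteq> {}"
      proof -
        have "G u \<in> K" "u \<in> {a<..<b}" using uT unfolding T_def by auto
        moreover have "phi f c d u \<in> {c<..<d}" using good_phi(1)[OF g] \<open>u \<in> {a<..<b}\<close> by auto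
        ultimately have "G u \<in> U1 \<inter> K" unfolding U1_def G_def using vw by auto
        then show ?thesis by blast
      qed
      have "U1 \<inter> K = {} \<or> U2 \<inter> K = {}" by (rule connectedD[OF K(1) o1 o2 disj cover])
      then have "U2 \<inter> K = {}" using ne1 by blast
      then have "K \<subseteq> X \<inter> U1" using cover K(2) unfolding X_def by blast
      also have "\<dots> = G ` {v<..<w}" by (rule gr)
      also have "\<dots> \<subseteq> e" unfolding e_def using vw by auto
      finally show False using notsub by blast
    qed
    define L where "L = {u\<in>T. \<forall>x. a < x \<and> x \<le> u \<longrightarrow> x \<in> T}"
    define R where "R = {u\<in>T. \<forall>x. u \<le> x \<and> x < b \<longrightarrow> x \<in> T}"
    have TLR: "T = L \<union> R"
    proof
      show "L \<union> R \<subseteq> T" unfolding L_def R_def by blast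
      show "T \<subseteq> L \<union> R"
      proof
        fix u assume uT: "u \<in> T"
        then have u: "a < u" "u < b" unfolding T_def by auto
        show "u \<in> L \<union> R"
        proof (rule ccontr)
          assume "u \<notin> L \<union> R"
          then obtain v w where "a < v" "v \<le> u" "v \<notin> T" "u \<le> w" "w < b" "w \<notin> T"
            using uT unfolding L_def R_def by blast
          moreover then have "v \<noteq> u" "w \<noteq> u" using uT by auto
          ultimately show False using claim[of v u w] uT by auto
        qed
      qed
    qed
    have TS: "T \<subseteq> {a..b}" unfolding T_def by auto
    have iL: "is_interval L" unfolding is_interval_1
    proof (intro ballI allI impI)
      fix p q x assume "p \<in> L" "q \<in> L" "p \<le> x \<and> x \<le> q"
      then show "x \<in> L" unfolding L_def T_def by auto
    qed
    have iR: "is_interval R" unfolding is_interval_1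
    proof (intro ballI allI impI)
      fix p q x assume "p \<in> R" "q \<in> R" "p \<le> x \<and> x \<le> q"
      then show "x \<in> R" unfolding R_def T_def by auto
    qed
    have cL: "connected (G ` L)"
      by (rule connected_continuous_image[OF contG is_interval_connected[OF iL]])
         (use TS TLR in auto)
    have cR: "connected (G ` R)"
      by (rule connected_continuous_image[OF contG is_interval_connected[OF iR]])
         (use TS TLR in auto)
    have "K \<inter> e = G ` L \<union> G ` R" unfolding KeT TLR by blast
    then show ?thesis using finite_components_union2[OF cL cR] unfolding e_def G_def by simp
  qed
qed

lemma sa_inter: "S \<in> semialgebraic \<Longrightarrow> T \<in> semialgebraic \<Longrightarrow> S \<inter> T \<in> semialgebraic"
proof -
  assume "S \<in> semialgebraic" "T \<in> semialgebraic"
  then have "- (- S \<union> - T) \<in> semialgebraic" by (intro sa_compl sa_un)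
  then show ?thesis by simp
qed

lemma sa_box: "{a<..<b} \<times> {c<..<d} \<in> semialgebraic"
proof -
  have 1: "{z. peval2 [:[:-a,1:]:] z > 0} = {z. fst z > a}" by (auto simp: peval2_const)
  have 2: "{z. peval2 [:[:b,-1:]:] z > 0} = {z. fst z < b}" by (auto simp: peval2_const)
  have 3: "{z. peval2 [:[:-c:],[:1:]:] z > 0} = {z. snd z > c}" by (auto simp: peval2_lin)
  have 4: "{z. peval2 [:[:d:],[:-1:]:] z > 0} = {z. snd z < d}" by (auto simp: peval2_lin)
  have "{z. fst z > a} \<inter> {z. fst z < b} \<inter> ({z. snd z > c} \<inter> {z. snd z < d}) \<in> semialgebraic"
    unfolding 1[symmetric] 2[symmetric] 3[symmetric] 4[symmetric] by (intro sa_inter sa_pos)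
  moreover have "{z. fst z > a} \<inter> {z. fst z < b} \<inter> ({z. snd z > c} \<inter> {z. snd z < d}) = {a<..<b} \<times> {c<..<d}"
    by auto
  ultimately show ?thesis by simp
qed

lemma good_semialg:
  assumes "good f a b c d"
  shows "(\<lambda>x. (x, phi f c d x)) ` {a<..<b} \<in> semialgebraic"
proof -
  have "{z. peval2 f z = 0} \<inter> ({a<..<b} \<times> {c<..<d}) = (\<lambda>x. (x, phi f c d x)) ` {a<..<b}"
    by (rule good_graph[OF assms]) auto
  moreover have "{z. peval2 f z = 0} \<inter> ({a<..<b} \<times> {c<..<d}) \<in> semialgebraic"
    by (intro sa_inter sa_eq sa_box)
  ultimately show ?thesis by simp
qed

lemma interval_cell1:
  assumes "a < (b::real)"
  shows "{a<..<b} homeomorphic {0<..<(1::real)}"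
proof -
  have "{a<..<b} homeomorphic (UNIV::real set)" by (rule homeomorphic_open_interval_UNIV[OF assms])
  moreover have "{0<..<(1::real)} homeomorphic (UNIV::real set)" by (rule homeomorphic_open_interval_UNIV) simp
  ultimately show ?thesis using homeomorphic_sym homeomorphic_trans by blast
qed

lemma good_cell1:
  assumes g: "good f a b c d"
  shows "cell1 ((\<lambda>x. (x, phi f c d x)) ` {a<..<b})"
proof -
  let ?G = "\<lambda>x. (x, phi f c d x)"
  have "homeomorphism (?G ` {a<..<b}) {a<..<b} fst ?G"
    unfolding homeomorphism_def
  proof (intro conjI ballI)
    show "continuous_on (?G ` {a<..<b}) fst" by (intro continuous_intros)
    show "continuous_on {a<..<b} ?G"
      by (intro continuous_intros continuous_on_subset[OF good_cont[OF g]]) auto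
  qed (auto simp: image_image)
  then have "?G ` {a<..<b} homeomorphic {a<..<b}" unfolding homeomorphic_def by blast
  moreover have "a < b" using g unfolding good_def by simp
  ultimately show ?thesis unfolding cell1_def using interval_cell1 homeomorphic_trans by blast
qed


definition lo :: "nat \<Rightarrow> real \<Rightarrow> real" where
  "lo n x = of_int \<lfloor>x * 2 ^ n\<rfloor> / 2 ^ n"
definition hi :: "nat \<Rightarrow> real \<Rightarrow> real" where
  "hi n x = lo n x + 1 / 2 ^ n"

lemma lo_le: "lo n x \<le> x"
proof -
  have "of_int \<lfloor>x * 2 ^ n\<rfloor> \<le> x * 2 ^ n" by (rule of_int_floor_le)
  then show ?thesis unfolding lo_def by (simp add: divide_le_eq)
qed

lemma lt_hi: "x < hi n x"
proof -
  have "x * 2 ^ n < of_int \<lfloor>x * 2 ^ n\<rfloor> + 1" by (rule real_of_int_floor_add_one_gt)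
  then have "x < (of_int \<lfloor>x * 2 ^ n\<rfloor> + 1) / 2 ^ n" by (simp add: less_divide_eq)
  then show ?thesis unfolding hi_def lo_def by (simp add: add_divide_distrib)
qed

lemma lo_lt_hi: "lo n x < hi n x"
  unfolding hi_def by simp

lemma lo_eq:
  assumes "lo n y < x" "x < hi n y"
  shows "lo n x = lo n y" "hi n x = hi n y"
proof -
  have "of_int \<lfloor>y * 2 ^ n\<rfloor> < x * 2 ^ n"
    using assms(1) unfolding lo_def by (simp add: divide_less_eq)
  moreover have "x * 2 ^ n < of_int \<lfloor>y * 2 ^ n\<rfloor> + 1"
    using assms(2) unfolding hi_def lo_def by (simp add: less_divide_eq add_divide_distrib[symmetric])
  ultimately have "\<lfloor>x * 2 ^ n\<rfloor> = \<lfloor>y * 2 ^ n\<rfloor>" by (intro floor_unique) auto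
  then show "lo n x = lo n y" "hi n x = hi n y" unfolding hi_def lo_def by auto
qed

lemma lo_nest:
  assumes "m \<le> n"
  shows "lo m x \<le> lo n x" "hi n x \<le> hi m x"
proof -
  define K where "K = \<lfloor>x * 2 ^ m\<rfloor>"
  define k where "k = \<lfloor>x * 2 ^ n\<rfloor>"
  define N :: int where "N = 2 ^ (n - m)"
  have pw: "(2::real) ^ n = 2 ^ m * of_int N" unfolding N_def using assms
    by (simp add: power_add[symmetric])
  have N0: "N > 0" unfolding N_def by simp
  have "of_int K \<le> x * 2 ^ m" unfolding K_def by (rule of_int_floor_le)
  then have "of_int (K * N) \<le> x * 2 ^ n" unfolding pw using N0 by (simp add: mult.assoc mult_right_mono)
  then have KN: "K * N \<le> k" unfolding k_def by (simp add: le_floor_iff)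
  have "x * 2 ^ m < of_int K + 1" unfolding K_def by (rule real_of_int_floor_add_one_gt)
  then have "x * 2 ^ n < of_int ((K + 1) * N)" unfolding pw using N0
    by (simp add: mult.assoc[symmetric] mult_strict_right_mono)
  moreover have "of_int k \<le> x * 2 ^ n" unfolding k_def by (rule of_int_floor_le)
  ultimately have "k < (K + 1) * N" by linarith
  then have kN: "k + 1 \<le> (K + 1) * N" by simp
  have "lo m x = of_int (K * N) / 2 ^ n" unfolding lo_def K_def pw using N0 by simp
  also have "\<dots> \<le> of_int k / 2 ^ n"
    by (rule divide_right_mono) (use KN in \<open>simp only: of_int_le_iff\<close>, simp)
  finally show "lo m x \<le> lo n x" unfolding lo_def k_def .
  have "hi n x = of_int (k + 1) / 2 ^ n" unfolding hi_def lo_def k_def by (simp add: add_divide_distrib)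
  also have "\<dots> \<le> of_int ((K + 1) * N) / 2 ^ n"
    by (rule divide_right_mono) (use kN in \<open>simp only: of_int_le_iff\<close>, simp)
  also have "\<dots> = hi m x" unfolding hi_def lo_def K_def pw using N0 by (simp add: add_divide_distrib)
  finally show "hi n x \<le> hi m x" .
qed

definition Dy :: "real set" where "Dy = (\<lambda>(k::int, n::nat). of_int k / 2 ^ n) ` UNIV"

lemma countable_Dy: "countable Dy"
  unfolding Dy_def by (rule countable_image) simp

lemma lo_Dy: "lo n x \<in> Dy"
  unfolding Dy_def lo_def by (rule image_eqI[of _ _ "(\<lfloor>x * 2 ^ n\<rfloor>, n)"]) auto

lemma mid_aux: "(k::real) / 2 ^ n + 1 / 2 ^ Suc n = (2 * k + 1) / 2 ^ Suc n"
proof -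
  have "(2 * k + 1) / 2 ^ Suc n = (2 * k) / (2 * 2 ^ n) + 1 / 2 ^ Suc n"
    by (simp add: add_divide_distrib)
  also have "(2 * k) / (2 * 2 ^ n) = k / 2 ^ n" by simp
  finally show ?thesis by simp
qed

lemma mid_Dy: "lo n x + 1 / 2 ^ Suc n \<in> Dy"
proof -
  have "lo n x + 1 / 2 ^ Suc n = of_int (2 * \<lfloor>x * 2 ^ n\<rfloor> + 1) / 2 ^ Suc n"
    unfolding lo_def mid_aux by simp
  also have "\<dots> = (\<lambda>(k::int, n::nat). of_int k / 2 ^ n) (2 * \<lfloor>x * 2 ^ n\<rfloor> + 1, Suc n)"
    by simp
  finally have eq: "lo n x + 1 / 2 ^ Suc n = (\<lambda>(k::int, n::nat). of_int k / 2 ^ n) (2 * \<lfloor>x * 2 ^ n\<rfloor> + 1, Suc n)" .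
  show ?thesis unfolding Dy_def eq by (rule rangeI)
qed

lemma mid_in: "lo n x < lo n x + 1 / 2 ^ Suc n" "lo n x + 1 / 2 ^ Suc n < hi n x"
proof -
  have "(1::real) / 2 ^ Suc n < 1 / 2 ^ n" by (simp add: divide_strict_left_mono)
  then show "lo n x < lo n x + 1 / 2 ^ Suc n" "lo n x + 1 / 2 ^ Suc n < hi n x"
    unfolding hi_def by simp_all
qed

lemma small_pow: "(0::real) < \<delta> \<Longrightarrow> \<exists>n. 1 / 2 ^ n < \<delta>"
proof -
  assume "0 < \<delta>"
  then obtain n where "(1/2::real) ^ n < \<delta>" using real_arch_pow_inv[of \<delta> "1/2"] by auto
  then show ?thesis by (auto simp: power_one_over)
qed

lemma hi_minus_lo: "hi n x - lo n x = 1 / 2 ^ n" unfolding hi_def by simp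


definition cand :: "real poly poly \<Rightarrow> real \<times> real \<Rightarrow> nat \<Rightarrow> bool" where
  "cand f p n \<longleftrightarrow> lo n (fst p) < fst p \<and>
     (\<exists>c d. good f (lo n (fst p)) (hi n (fst p)) c d \<and> c < snd p \<and> snd p < d)"

definition lev :: "real poly poly \<Rightarrow> real \<times> real \<Rightarrow> nat" where
  "lev f p = (LEAST n. cand f p n)"

definition cdsel :: "real poly poly \<Rightarrow> real \<times> real \<Rightarrow> nat \<Rightarrow> real \<times> real" where
  "cdsel f p n = (SOME cd. good f (lo n (fst p)) (hi n (fst p)) (fst cd) (snd cd) \<and> fst cd < snd p \<and> snd p < snd cd)"

definition cellof :: "real poly poly \<Rightarrow> real \<times> real \<Rightarrow> (real \<times> real) set" where
  "cellof f p = (let n = lev f p; cd = cdsel f p n in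
     (\<lambda>x. (x, phi f (fst cd) (snd cd) x)) ` {lo n (fst p)<..<hi n (fst p)})"

lemma cand_data:
  assumes "cand f p n"
  shows "good f (lo n (fst p)) (hi n (fst p)) (fst (cdsel f p n)) (snd (cdsel f p n)) \<and>
         fst (cdsel f p n) < snd p \<and> snd p < snd (cdsel f p n)"
proof -
  obtain c d where "good f (lo n (fst p)) (hi n (fst p)) c d \<and> c < snd p \<and> snd p < d"
    using assms unfolding cand_def by blast
  then have "\<exists>cd. good f (lo n (fst p)) (hi n (fst p)) (fst cd) (snd cd) \<and> fst cd < snd p \<and> snd p < snd cd"
    by (intro exI[of _ "(c, d)"]) simp
  then show ?thesis unfolding cdsel_def by (rule someI_ex)
qed

lemma cellof_form:
  assumes "\<exists>n. cand f p n" "p \<in> zero_set f"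
  obtains n c d where "good f (lo n (fst p)) (hi n (fst p)) c d" "c < snd p" "snd p < d"
    "lo n (fst p) < fst p" "fst p < hi n (fst p)"
    "cellof f p = (\<lambda>x. (x, phi f c d x)) ` {lo n (fst p)<..<hi n (fst p)}"
    "\<forall>m. cand f p m \<longrightarrow> n \<le> m" "snd p = phi f c d (fst p)"
proof -
  let ?n = "lev f p"
  have cn: "cand f p ?n" unfolding lev_def using assms(1) by (rule LeastI_ex)
  have mn: "\<forall>m. cand f p m \<longrightarrow> ?n \<le> m" unfolding lev_def by (auto intro: Least_le)
  let ?c = "fst (cdsel f p ?n)" and ?d = "snd (cdsel f p ?n)"
  have g: "good f (lo ?n (fst p)) (hi ?n (fst p)) ?c ?d" "?c < snd p" "snd p < ?d"
    using cand_data[OF cn] by auto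
  have lt: "lo ?n (fst p) < fst p" using cn unfolding cand_def by simp
  have se: "snd p = phi f ?c ?d (fst p)"
    by (rule good_phi_unique[OF g(1)]) (use g lt lt_hi[of "fst p" ?n] assms(2) in \<open>auto simp: zero_set_def\<close>)
  show ?thesis by (rule that[OF g lt lt_hi[of "fst p" ?n] _ mn se]) (simp add: cellof_def Let_def)
qed

lemma cellof_rep:
  assumes p: "p \<in> zero_set f" "\<exists>n. cand f p n" and q: "q \<in> cellof f p"
  shows "q \<in> zero_set f" "\<exists>n. cand f q n" "cellof f q = cellof f p"
proof -
  obtain n c d where D: "good f (lo n (fst p)) (hi n (fst p)) c d" "c < snd p" "snd p < d"
    "lo n (fst p) < fst p" "fst p < hi n (fst p)"
    "cellof f p = (\<lambda>x. (x, phi f c d x)) ` {lo n (fst p)<..<hi n (fst p)}"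
    "\<forall>m. cand f p m \<longrightarrow> n \<le> m" "snd p = phi f c d (fst p)"
    by (rule cellof_form[OF p(2,1)])
  define A where "A = lo n (fst p)"
  define B where "B = hi n (fst p)"
  obtain x where x: "x \<in> {A<..<B}" "q = (x, phi f c d x)" using q D(6) unfolding A_def B_def by blast
  have xAB: "x \<in> {A..B}" using x by auto
  have gAB: "good f A B c d" using D(1) unfolding A_def B_def .
  show qX: "q \<in> zero_set f" using good_phi(2)[OF gAB xAB] x(2) by (simp add: zero_set_def)
  have lox: "lo n x = A" "hi n x = B" using lo_eq[of n "fst p" x] x(1) unfolding A_def B_def by auto
  have phix: "phi f c d x \<in> {c<..<d}" using good_phi(1)[OF gAB xAB] .
  have cqn: "cand f q n" unfolding cand_def
  proof (intro conjI exI)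
    show "lo n (fst q) < fst q" using x lox by simp
    show "good f (lo n (fst q)) (hi n (fst q)) c d" using x lox gAB by simp
    show "c < snd q" "snd q < d" using x phix by auto
  qed
  then show cq: "\<exists>n. cand f q n" by blast
  obtain m c' d' where E: "good f (lo m (fst q)) (hi m (fst q)) c' d'" "c' < snd q" "snd q < d'"
    "lo m (fst q) < fst q" "fst q < hi m (fst q)"
    "cellof f q = (\<lambda>x. (x, phi f c' d' x)) ` {lo m (fst q)<..<hi m (fst q)}"
    "\<forall>k. cand f q k \<longrightarrow> m \<le> k" "snd q = phi f c' d' (fst q)"
    by (rule cellof_form[OF cq qX])
  define A' where "A' = lo m x"
  define B' where "B' = hi m x"
  have mn: "m \<le> n" using E(7) cqn by blast
  have nest: "A' \<le> A" "B \<le> B'" using lo_nest[OF mn, of x] lox unfolding A'_def B'_def by auto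
  have gAB': "good f A' B' c' d'" using E(1) x(2) unfolding A'_def B'_def by simp
  have agree: "phi f c d t = phi f c' d' t" if "t \<in> {A..B}" for t
  proof (rule good_agree[OF gAB gAB' xAB _ _ that])
    show "x \<in> {A'..B'}" using E(4,5) x(2) unfolding A'_def B'_def by auto
    show "phi f c d x = phi f c' d' x" using E(8) x(2) by simp
    show "t \<in> {A'..B'}" using that nest by auto
  qed
  have pm: "cand f p m"
  proof -
    have pin: "lo m x < fst p" "fst p < hi m x" using D(4,5) nest unfolding A_def B_def A'_def B'_def by auto
    have lop: "lo m (fst p) = A'" "hi m (fst p) = B'" using lo_eq[OF pin] unfolding A'_def B'_def by auto
    have "snd p = phi f c' d' (fst p)" using D(8) agree[of "fst p"] D(4,5) unfolding A_def B_def by auto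
    moreover have "phi f c' d' (fst p) \<in> {c'<..<d'}"
      using good_phi(1)[OF gAB'] pin unfolding A'_def B'_def by auto
    ultimately show ?thesis unfolding cand_def
    proof (intro conjI exI)
      show "lo m (fst p) < fst p" using lop pin A'_def by simp
      show "good f (lo m (fst p)) (hi m (fst p)) c' d'" using lop gAB' by simp
    qed auto
  qed
  have "n \<le> m" using D(7) pm by blast
  then have "m = n" using mn by simp
  then have AA: "lo m (fst q) = A" "hi m (fst q) = B" using lox x(2) by auto
  have "cellof f q = (\<lambda>x. (x, phi f c' d' x)) ` {A<..<B}" using E(6) AA by simp
  also have "\<dots> = (\<lambda>x. (x, phi f c d x)) ` {A<..<B}"
    by (rule image_cong) (use agree in auto)
  also have "\<dots> = cellof f p" using D(6) unfolding A_def B_def by simp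
  finally show "cellof f q = cellof f p" .
qed

lemma self_in_cellof:
  assumes "p \<in> zero_set f" "\<exists>n. cand f p n"
  shows "p \<in> cellof f p"
proof -
  obtain n c d where D0: "good f (lo n (fst p)) (hi n (fst p)) c d" "c < snd p" "snd p < d"
    and D: "lo n (fst p) < fst p" "fst p < hi n (fst p)"
    "cellof f p = (\<lambda>x. (x, phi f c d x)) ` {lo n (fst p)<..<hi n (fst p)}"
    and D1: "\<forall>m. cand f p m \<longrightarrow> n \<le> m" and D2: "snd p = phi f c d (fst p)"
    by (rule cellof_form[OF assms(2,1)])
  have "(fst p, phi f c d (fst p)) \<in> (\<lambda>x. (x, phi f c d x)) ` {lo n (fst p)<..<hi n (fst p)}"
    using D(1,2) by auto
  moreover have "p = (fst p, phi f c d (fst p))" using D2 by (simp add: prod_eq_iff)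
  ultimately show ?thesis using D(3) by simp
qed


lemma sa_point: "{p} \<in> semialgebraic"
proof -
  obtain a b where p: "p = (a, b)" by (cases p)
  define P :: "real poly poly" where
    "P = [:[:-a,1:]:] * [:[:-a,1:]:] + [:[:-b:],[:1:]:] * [:[:-b:],[:1:]:]"
  have "peval2 P z = (fst z - a) * (fst z - a) + (snd z - b) * (snd z - b)" for z
    unfolding P_def peval2_add peval2_mult peval2_const peval2_lin by simp
  then have "{z. peval2 P z = 0} = {p}" unfolding p by (auto simp: prod_eq_iff)
  then show ?thesis using sa_eq[of P] by simp
qed

lemma comp_ok:
  assumes "C \<in> components S" "S \<subseteq> e" "e \<in> \<A>" "cell1 e"
  shows "(\<exists>p. C = {p}) \<or> geodesic_segment \<A> C"
proof (cases "\<exists>p q. p \<in> C \<and> q \<in> C \<and> p \<noteq> q")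
  case True
  have "connected C" using assms(1) by (rule in_components_connected)
  moreover have "C \<subseteq> e" using in_components_subset[OF assms(1)] assms(2) by blast
  ultimately show ?thesis using True assms(3,4) unfolding geodesic_segment_def by blast
next
  case False
  obtain p where "p \<in> C" using in_components_nonempty[OF assms(1)] by blast
  then have "C = {p}" using False by blast
  then show ?thesis by blast
qed

lemma comp_point:
  assumes "C \<in> components S" "S \<subseteq> {p}"
  shows "C = {p}"
  using in_components_nonempty[OF assms(1)] in_components_subset[OF assms(1)] assms(2) by blast

lemma curve_K:
  assumes "shortest_curve g X A B"
  shows "connected (g ` {0..1})" "g ` {0..1} \<subseteq> X"
proof -
  have "continuous_on {0..1} g" using assms
    unfolding shortest_curve_def curve_in_def piecewise_C2_curve_def by blast
  then show "connected (g ` {0..1})" by (rule connected_continuous_image) simp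
  show "g ` {0..1} \<subseteq> X" using assms unfolding shortest_curve_def curve_in_def by blast
qed

lemma X0_sub:
  fixes f :: "real poly poly"
  assumes "p \<in> zero_set f" "\<not> (\<exists>n. cand f p n)"
  shows "peval2 (pderiv f) p = 0 \<or> fst p \<in> Dy"
proof (rule ccontr)
  assume "\<not> ?thesis"
  then have nz: "peval2 (pderiv f) (fst p, snd p) \<noteq> 0" and nd: "fst p \<notin> Dy" by auto
  have z: "peval2 f (fst p, snd p) = 0" using assms(1) by (simp add: zero_set_def)
  obtain \<delta> c d where D: "\<delta> > 0" "c < snd p" "snd p < d"
    "\<forall>a b. fst p - \<delta> \<le> a \<longrightarrow> a < b \<longrightarrow> b \<le> fst p + \<delta> \<longrightarrow> good f a b c d"
    using ift[OF z nz] by blast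
  obtain n where n: "1 / 2 ^ n < \<delta>" using small_pow[OF D(1)] by blast
  let ?x = "fst p"
  have "lo n ?x \<noteq> ?x" using lo_Dy[of n ?x] nd by metis
  then have l: "lo n ?x < ?x" using lo_le[of n ?x] by linarith
  have h: "?x < hi n ?x" by (rule lt_hi)
  have hl: "hi n ?x - lo n ?x = 1 / 2 ^ n" by (rule hi_minus_lo)
  have a1: "fst p - \<delta> \<le> lo n ?x" using h hl n by linarith
  have a2: "hi n ?x \<le> fst p + \<delta>" using l hl n by linarith
  have "good f (lo n ?x) (hi n ?x) c d" using D(4) a1 a2 lo_lt_hi by blast
  then have "cand f p n" unfolding cand_def using l D(2,3) by blast
  then show False using assms(2) by blast
qed


lemma main_pos:
  fixes f :: "real poly poly"
  assumes irr: "irreducible f" and deg: "degree f \<noteq> 0"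
  shows "\<exists>\<A>. cell_decomposition \<A> (zero_set f) \<and> finiteness_property \<A> (zero_set f)"
proof -
  define X where "X = zero_set f"
  define X1 where "X1 = {p \<in> X. \<exists>n. cand f p n}"
  define X0 where "X0 = X - X1"
  define \<A> where "\<A> = (\<lambda>p. {p}) ` X0 \<union> cellof f ` X1"
  define W where "W = (\<Union>x\<in>Dy. (\<lambda>y. (x, y)) ` {y. peval2 f (x, y) = 0})"
  have cW: "countable W" unfolding W_def
    by (intro countable_UN countable_Dy countable_image countable_finite slice_finite[OF irr deg])
  have X0sub: "X0 \<subseteq> {z. peval2 f z = 0 \<and> peval2 (pderiv f) z = 0} \<union> W"
  proof
    fix p assume p: "p \<in> X0"
    then have pX: "p \<in> zero_set f" and nc: "\<not> (\<exists>n. cand f p n)" unfolding X0_def X1_def X_def by auto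
    have z: "peval2 f p = 0" using pX by (simp add: zero_set_def)
    show "p \<in> {z. peval2 f z = 0 \<and> peval2 (pderiv f) z = 0} \<union> W"
    proof (cases "peval2 (pderiv f) p = 0")
      case True then show ?thesis using z by simp
    next
      case False
      then have "fst p \<in> Dy" using X0_sub[OF pX nc] by blast
      moreover have "snd p \<in> {y. peval2 f (fst p, y) = 0}" using z by simp
      moreover have "p \<in> (\<lambda>y. (fst p, y)) ` {y. peval2 f (fst p, y) = 0}"
        by (rule image_eqI[of _ _ "snd p"]) (use z in simp_all)
      ultimately have "p \<in> W" unfolding W_def by blast
      then show ?thesis by simp
    qed
  qed
  have cX0: "countable X0"
    using countable_subset[OF X0sub] countable_finite[OF crit_finite[OF irr deg]] cW by blast
  have X1W: "cellof f ` X1 \<subseteq> cellof f ` (X1 \<inter> W)"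
  proof
    fix e assume "e \<in> cellof f ` X1"
    then obtain p where p: "p \<in> X1" "e = cellof f p" by blast
    have pX: "p \<in> zero_set f" and pc: "\<exists>n. cand f p n" using p(1) unfolding X1_def X_def by auto
    obtain n c d where D: "good f (lo n (fst p)) (hi n (fst p)) c d"
      and D': "c < snd p" "snd p < d"
    "lo n (fst p) < fst p" "fst p < hi n (fst p)"
      and D2: "cellof f p = (\<lambda>x. (x, phi f c d x)) ` {lo n (fst p)<..<hi n (fst p)}"
      and D'': "\<forall>m. cand f p m \<longrightarrow> n \<le> m" "snd p = phi f c d (fst p)"
      by (rule cellof_form[OF pc pX])
    define m where "m = lo n (fst p) + 1 / 2 ^ Suc n"
    have m: "m \<in> {lo n (fst p)<..<hi n (fst p)}" unfolding m_def using mid_in by auto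
    define q where "q = (m, phi f c d m)"
    have qc: "q \<in> cellof f p" unfolding D2 q_def using m by blast
    have qX: "q \<in> zero_set f" and qc2: "\<exists>n. cand f q n" and qe: "cellof f q = cellof f p"
      using cellof_rep[OF pX pc qc] by auto
    have "m \<in> Dy" unfolding m_def by (rule mid_Dy)
    moreover have "peval2 f (m, phi f c d m) = 0" using qX unfolding q_def by (simp add: zero_set_def)
    ultimately have "q \<in> W" unfolding W_def q_def by blast
    moreover have "q \<in> X1" using qX qc2 unfolding X1_def X_def by blast
    ultimately show "e \<in> cellof f ` (X1 \<inter> W)" using qe p(2) by blast
  qed
  have cA: "countable \<A>" unfolding \<A>_def
  proof (rule countable_Un)
    show "countable ((\<lambda>p. {p}) ` X0)" using cX0 by simp
    have "countable (cellof f ` (X1 \<inter> W))" using cW by simp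
    then show "countable (cellof f ` X1)" using X1W countable_subset by blast
  qed
  have cell1: "is_cell (cellof f p) \<and> cellof f p \<noteq> {} \<and> cell1 (cellof f p) \<and>
      finite (components (K \<inter> cellof f p))" if "p \<in> X1" "connected K" "K \<subseteq> X" for p K
  proof -
    have pX: "p \<in> zero_set f" and pc: "\<exists>n. cand f p n" using that unfolding X1_def X_def by auto
    obtain n c d where D: "good f (lo n (fst p)) (hi n (fst p)) c d"
      and D': "c < snd p" "snd p < d"
    "lo n (fst p) < fst p" "fst p < hi n (fst p)"
      and D2: "cellof f p = (\<lambda>x. (x, phi f c d x)) ` {lo n (fst p)<..<hi n (fst p)}"
      and D'': "\<forall>m. cand f p m \<longrightarrow> n \<le> m" "snd p = phi f c d (fst p)"
      by (rule cellof_form[OF pc pX])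
    have "K \<subseteq> {z. peval2 f z = 0}" using that(3) unfolding X_def zero_set_def .
    then have "finite (components (K \<inter> cellof f p))"
      using good_finite_components[OF D(1) that(2)] unfolding D2 by blast
    moreover have "cellof f p \<noteq> {}" using self_in_cellof[OF pX pc] by blast
    ultimately show ?thesis unfolding is_cell_def D2
      using good_semialg[OF D(1)] good_cell1[OF D(1)] by simp
  qed
  have cell_dec: "cell_decomposition \<A> X"
    unfolding cell_decomposition_def
  proof (intro conjI)
    show "countable \<A>" by (rule cA)
    show "\<forall>e\<in>\<A>. is_cell e \<and> e \<noteq> {}"
    proof
      fix e assume "e \<in> \<A>"
      then consider p where "p \<in> X0" "e = {p}" | p where "p \<in> X1" "e = cellof f p"
        unfolding \<A>_def by blast
      then show "is_cell e \<and> e \<noteq> {}"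
      proof cases
        case 1 then show ?thesis unfolding is_cell_def cell0_def using sa_point by auto
      next
        case 2 then show ?thesis using cell1[of p "{}"] by auto
      qed
    qed
  next
    show "\<forall>e\<in>\<A>. \<forall>e'\<in>\<A>. e \<noteq> e' \<longrightarrow> e \<inter> e' = {}"
    proof (intro ballI impI)
    fix e e' assume e: "e \<in> \<A>" and e': "e' \<in> \<A>" and ne: "e \<noteq> e'"
    have cl: "cellof f p \<inter> Y = {}" if cp: "p \<in> X1" "Y \<noteq> cellof f p" "Y \<in> cellof f ` X1" for p Y
    proof (rule ccontr)
      assume "cellof f p \<inter> Y \<noteq> {}"
      then obtain r where r: "r \<in> cellof f p" "r \<in> Y" by blast
      obtain p' where p': "p' \<in> X1" "Y = cellof f p'" using cp(3) by blast
      have "cellof f r = cellof f p" using cellof_rep(3)[OF _ _ r(1)] cp(1) unfolding X1_def X_def by blast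
      moreover have "cellof f r = cellof f p'" using cellof_rep(3)[OF _ _ r(2)[unfolded p'(2)]] p'(1) unfolding X1_def X_def by blast
      ultimately show False using cp(2) p'(2) by simp
    qed
    have pt: "{p} \<inter> cellof f q = {}" if "p \<in> X0" "q \<in> X1" for p q
    proof (rule ccontr)
      assume "{p} \<inter> cellof f q \<noteq> {}"
      then have "p \<in> cellof f q" by blast
      then have "\<exists>n. cand f p n" using cellof_rep(2)[of q f p] that(2) unfolding X1_def X_def by blast
      then show False using that(1) unfolding X0_def X1_def by blast
    qed
    from e consider p where "p \<in> X0" "e = {p}" | p where "p \<in> X1" "e = cellof f p"
      unfolding \<A>_def by blast
    then show "e \<inter> e' = {}"
    proof cases
      case 1
      note o1 = 1
      from e' consider p' where "p' \<in> X0" "e' = {p'}" | p' where "p' \<in> X1" "e' = cellof f p'"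
        unfolding \<A>_def by blast
      then show ?thesis
      proof cases
        case 1
        then show ?thesis using o1 ne by auto
      next
        case 2
        then show ?thesis using pt[of p p'] o1 by simp
      qed
    next
      case 2
      note o2 = 2
      from e' consider p' where "p' \<in> X0" "e' = {p'}" | p' where "p' \<in> X1" "e' = cellof f p'"
        unfolding \<A>_def by blast
      then show ?thesis
      proof cases
        case 1
        then show ?thesis using pt[of p' p] o2 by auto
      next
        case 2
        then show ?thesis using cl[of p e'] o2 ne by blast
      qed
    qed
    qed
  next
    show "\<Union>\<A> = X"
    proof
      show "\<Union>\<A> \<subseteq> X" unfolding \<A>_def X0_def
        using cellof_rep(1) unfolding X1_def X_def by blast
      show "X \<subseteq> \<Union>\<A>"
      proof
        fix p assume "p \<in> X"
        show "p \<in> \<Union>\<A>"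
        proof (cases "p \<in> X1")
          case True
          then have "p \<in> cellof f p" using self_in_cellof unfolding X1_def X_def by blast
          then show ?thesis using True unfolding \<A>_def by blast
        next
          case False then show ?thesis using \<open>p \<in> X\<close> unfolding \<A>_def X0_def by blast
        qed
      qed
    qed
  qed
  have fin: "finiteness_property \<A> X"
    unfolding finiteness_property_def Let_def
  proof (intro ballI allI impI)
    fix A B g e assume sc: "shortest_curve g X A B" and e: "e \<in> \<A>"
    let ?K = "g ` {0..1}"
    have K: "connected ?K" "?K \<subseteq> X" using curve_K[OF sc] by auto
    from e consider p where "p \<in> X0" "e = {p}" | p where "p \<in> X1" "e = cellof f p"
      unfolding \<A>_def by blast
    then show "?K \<inter> e = {} \<or> finite (components (?K \<inter> e)) \<and>
      (\<forall>C\<in>components (?K \<inter> e). (\<exists>p. C = {p}) \<or> geodesic_segment \<A> C)"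
    proof cases
      case 1
      have "components (?K \<inter> e) \<subseteq> Pow {p}" using in_components_subset 1(2) by blast
      then have "finite (components (?K \<inter> e))" by (rule finite_subset) simp
      moreover have "\<forall>C\<in>components (?K \<inter> e). \<exists>p. C = {p}" using comp_point 1(2) by blast
      ultimately show ?thesis by blast
    next
      case 2
      have "finite (components (?K \<inter> e))" using cell1[OF 2(1) K] 2(2) by simp
      moreover have "\<forall>C\<in>components (?K \<inter> e). (\<exists>p. C = {p}) \<or> geodesic_segment \<A> C"
        using comp_ok[OF _ _ e] cell1[OF 2(1) K] 2(2) by blast
      ultimately show ?thesis by blast
    qed
  qed
  show ?thesis using cell_dec fin unfolding X_def by blast
qed


lemma line_cell1: "cell1 ({r} \<times> (UNIV::real set))"
proof -
  have "homeomorphism ({r} \<times> (UNIV::real set)) UNIV snd (\<lambda>y. (r, y))"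
    unfolding homeomorphism_def by (auto intro!: continuous_intros)
  then have "{r} \<times> (UNIV::real set) homeomorphic (UNIV::real set)" unfolding homeomorphic_def by blast
  moreover have "{0<..<(1::real)} homeomorphic (UNIV::real set)" by (rule homeomorphic_open_interval_UNIV) simp
  ultimately show ?thesis unfolding cell1_def using homeomorphic_sym homeomorphic_trans by blast
qed

lemma line_sa: "{r} \<times> (UNIV::real set) \<in> semialgebraic"
proof -
  have "{z. peval2 [:[:-r,1:]:] z = 0} = {r} \<times> (UNIV::real set)" by (auto simp: peval2_const)
  then show ?thesis using sa_eq[of "[:[:-r,1:]:]"] by simp
qed

lemma main_zero:
  fixes f :: "real poly poly"
  assumes irr: "irreducible f" and deg: "degree f = 0"
  shows "\<exists>\<A>. cell_decomposition \<A> (zero_set f) \<and> finiteness_property \<A> (zero_set f)"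
proof -
  obtain c0 where f: "f = [:c0:]" using deg by (metis degree_eq_zeroE)
  have "f \<noteq> 0" using irr by (simp add: irreducible_def)
  then have c0: "c0 \<noteq> 0" using f by simp
  define R where "R = {x. poly c0 x = 0}"
  have fR: "finite R" unfolding R_def using poly_roots_finite[OF c0] .
  define X where "X = zero_set f"
  have X: "X = {z. fst z \<in> R}" unfolding X_def zero_set_def f R_def by (simp add: peval2_const)
  define \<A> where "\<A> = (\<lambda>r. {r} \<times> (UNIV::real set)) ` R"
  have cd: "cell_decomposition \<A> X"
    unfolding cell_decomposition_def
  proof (intro conjI)
    show "countable \<A>" unfolding \<A>_def using fR by (simp add: countable_finite)
    show "\<forall>e\<in>\<A>. is_cell e \<and> e \<noteq> {}" unfolding \<A>_def is_cell_def using line_sa line_cell1 by auto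
    show "\<forall>e\<in>\<A>. \<forall>e'\<in>\<A>. e \<noteq> e' \<longrightarrow> e \<inter> e' = {}" unfolding \<A>_def by auto
    show "\<Union>\<A> = X" unfolding \<A>_def X by auto
  qed
  have fp: "finiteness_property \<A> X"
    unfolding finiteness_property_def Let_def
  proof (intro ballI allI impI)
    fix A B g e assume sc: "shortest_curve g X A B" and e: "e \<in> \<A>"
    let ?K = "g ` {0..1}"
    have K: "connected ?K" "?K \<subseteq> X" using curve_K[OF sc] by auto
    obtain r where r: "r \<in> R" "e = {r} \<times> UNIV" using e unfolding \<A>_def by blast
    have "connected (fst ` ?K)" by (rule connected_continuous_image[OF continuous_on_fst[OF continuous_on_id] K(1)])
    moreover have "finite (fst ` ?K)" using K(2) fR unfolding X by (auto intro: finite_subset)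
    ultimately have "fst ` ?K = {} \<or> (\<exists>a. fst ` ?K = {a})" using connected_finite_iff_sing by blast
    then have S: "?K \<inter> e = {} \<or> ?K \<inter> e = ?K"
    proof
      assume "fst ` ?K = {}" then show ?thesis by simp
    next
      assume "\<exists>a. fst ` ?K = {a}"
      then obtain a where a: "fst ` ?K = {a}" by blast
      have fa: "fst z = a" if "z \<in> ?K" for z using a that by blast
      show ?thesis
      proof (cases "a = r")
        case True
        have "?K \<subseteq> e"
        proof
          fix z assume "z \<in> ?K"
          then have "fst z = r" using fa True by blast
          then show "z \<in> e" unfolding r(2) by (simp add: mem_Times_iff)
        qed
        then show ?thesis by blast
      next
        case False
        have "?K \<inter> e = {}"
        proof (rule ccontr)
          assume "?K \<inter> e \<noteq> {}"
          then obtain z where "z \<in> ?K" "z \<in> e" by blast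
          then have "fst z = a" "fst z = r" using fa unfolding r(2) by (auto simp: mem_Times_iff)
          then show False using False by simp
        qed
        then show ?thesis by blast
      qed
    qed
    show "?K \<inter> e = {} \<or> finite (components (?K \<inter> e)) \<and>
      (\<forall>C\<in>components (?K \<inter> e). (\<exists>p. C = {p}) \<or> geodesic_segment \<A> C)"
    proof (cases "?K \<inter> e = {}")
      case False
      then have KS: "?K \<inter> e = ?K" using S by blast
      have ne: "?K \<noteq> {}" using False by blast
      have "components ?K = {?K}" unfolding components_eq_sing_iff using K(1) ne by blast
      then have "components (?K \<inter> e) = {?K}" unfolding KS .
      moreover have "\<forall>C\<in>components (?K \<inter> e). (\<exists>p. C = {p}) \<or> geodesic_segment \<A> C"
        using comp_ok[OF _ _ e] line_cell1 r(2) by blast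
      ultimately show ?thesis by simp
    qed simp
  qed
  show ?thesis using cd fp unfolding X_def by blast
qed

theorem corollary2p7:
  fixes f :: "real poly poly"
  assumes "irreducible f"
  shows "\<exists>\<A>. cell_decomposition \<A> (zero_set f) \<and> finiteness_property \<A> (zero_set f)"
  using main_pos[OF assms] main_zero[OF assms] by blast


end
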